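(* Let $N=\{1,\dots,n\}$ and let $F:2^N\to\mathbb{R}$ be quasi-submodular. Suppose the maximization procedure (described in the context) outputs the lattice $[X_+,Y_+]$. Then every global maximizer of $F$ lies in $[X_+,Y_+]$, i.e., for every $X_*\in\arg\max_{X\subseteq N}F(X)$ we have $X_+\subseteq X_*\subseteq Y_+$.
   Context: For $A\subseteq N$ and $i\in N$, write $A+i=A\cup\{i\}$, $A-i=A\setminus\{i\}$, and $F(i\mid A)=F(A+i)-F(A)$. A set function $F:2^N\to\mathbb{R}$ is quasi-submodular if for all $X,Y\subseteq N$ both hold: $F(X\cap Y)\ge F(X)\Rightarrow F(Y)\ge F(X\cup Y)$, and $F(X\cap Y)>F(X)\Rightarrow F(Y)>F(X\cup Y)$. For sets $A,B$, $[A,B]=\{U: A\subseteq U\subseteq B\}$. Maximization procedure: set $X_0=\emptyset$, $Y_0=N$; for $t=0,1,2,\dots$: let $U_t=\{u\in Y_t\setminus X_t: F(u\mid Y_t-u)>0\}$ and $X_{t+1}=X_t\cup U_t$; let $D_t=\{d\in Y_t\setminus X_t: F(d\mid X_t)<0\}$ and $Y_{t+1}=Y_t\setminus D_t$; if $X_{t+1}=X_t$ and $Y_{t+1}=Y_t$, stop and output the lattice $[X_t,Y_t]$; otherwise continue with $t+1$. *)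

theory Defs
  imports Complex_Main
begin

definition marg :: "('a set \<Rightarrow> real) \<Rightarrow> 'a \<Rightarrow> 'a set \<Rightarrow> real" where
  "marg F i A = F (insert i A) - F A"

definition quasi_submodular :: "'a set \<Rightarrow> ('a set \<Rightarrow> real) \<Rightarrow> bool" where
  "quasi_submodular N F \<longleftrightarrow>
     (\<forall>X Y. X \<subseteq> N \<longrightarrow> Y \<subseteq> N \<longrightarrow>
        (F (X \<inter> Y) \<ge> F X \<longrightarrow> F Y \<ge> F (X \<union> Y)) \<and>
        (F (X \<inter> Y) > F X \<longrightarrow> F Y > F (X \<union> Y)))"

definition max_step :: "('a set \<Rightarrow> real) \<Rightarrow> 'a set \<times> 'a set \<Rightarrow> 'a set \<times> 'a set" where
  "max_step F XY = (let X = fst XY; Y = snd XY;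
       U = {u \<in> Y - X. marg F u (Y - {u}) > 0};
       D = {d \<in> Y - X. marg F d X < 0}
     in (X \<union> U, Y - D))"

definition max_iter :: "'a set \<Rightarrow> ('a set \<Rightarrow> real) \<Rightarrow> nat \<Rightarrow> 'a set \<times> 'a set" where
  "max_iter N F t = (max_step F ^^ t) ({}, N)"

definition max_outputs :: "'a set \<Rightarrow> ('a set \<Rightarrow> real) \<Rightarrow> 'a set \<Rightarrow> 'a set \<Rightarrow> bool" where
  "max_outputs N F Xp Yp \<longleftrightarrow>
     (\<exists>t. max_iter N F t = (Xp, Yp) \<and> max_step F (Xp, Yp) = (Xp, Yp) \<and>
          (\<forall>s<t. max_step F (max_iter N F s) \<noteq> max_iter N F s))"

end

theory Submission
  imports Defs
begin

lemma qs1: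
  assumes "quasi_submodular N F" "A \<subseteq> N" "B \<subseteq> N" "F (A \<inter> B) \<ge> F A"
  shows "F B \<ge> F (A \<union> B)"
  using assms unfolding quasi_submodular_def by blast

lemma qs2:
  assumes "quasi_submodular N F" "A \<subseteq> N" "B \<subseteq> N" "F (A \<inter> B) > F A"
  shows "F B > F (A \<union> B)"
  using assms unfolding quasi_submodular_def by blast

lemma step_inv:
  assumes qs: "quasi_submodular N F"
    and XsN: "Xs \<subseteq> N" and mx: "\<forall>X. X \<subseteq> N \<longrightarrow> F X \<le> F Xs"
    and inv: "X \<subseteq> Xs" "Xs \<subseteq> Y" "Y \<subseteq> N"
  shows "fst (max_step F (X, Y)) \<subseteq> Xs \<and> Xs \<subseteq> snd (max_step F (X, Y))
         \<and> snd (max_step F (X, Y)) \<subseteq> N"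
proof -
  have U: "u \<in> Xs" if "u \<in> Y" "marg F u (Y - {u}) > 0" for u
  proof (rule ccontr)
    assume nu: "u \<notin> Xs"
    have i: "insert u Xs \<inter> (Y - {u}) = Xs" using nu inv by auto
    have un: "insert u Xs \<union> (Y - {u}) = Y" using that inv by auto
    have BN: "insert u Xs \<subseteq> N" using that inv by auto
    have AN: "Y - {u} \<subseteq> N" using inv by auto
    have "F (insert u Xs \<inter> (Y - {u})) \<ge> F (insert u Xs)" unfolding i using mx BN by blast
    from qs1[OF qs BN AN this] have "F (Y - {u}) \<ge> F Y" unfolding un .
    moreover have "insert u (Y - {u}) = Y" using that by auto
    ultimately show False using that unfolding marg_def by simp
  qed
  have D: "d \<notin> Xs" if "d \<in> Y" "d \<notin> X" "marg F d X < 0" for d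
  proof
    assume du: "d \<in> Xs"
    have i: "insert d X \<inter> (Xs - {d}) = X" using that inv by auto
    have un: "insert d X \<union> (Xs - {d}) = Xs" using du inv by auto
    have AN: "insert d X \<subseteq> N" using inv that by auto
    have BN: "Xs - {d} \<subseteq> N" using XsN by auto
    have "F (insert d X \<inter> (Xs - {d})) > F (insert d X)" unfolding i using that unfolding marg_def by simp
    from qs2[OF qs AN BN this] have "F (Xs - {d}) > F Xs" unfolding un .
    moreover have "F (Xs - {d}) \<le> F Xs" using mx BN by blast
    ultimately show False by linarith
  qed
  show ?thesis unfolding max_step_def Let_def fst_conv snd_conv using U D inv by blast
qed

lemma iter_inv:
  assumes qs: "quasi_submodular N F"
    and XsN: "Xs \<subseteq> N" and mx: "\<forall>X. X \<subseteq> N \<longrightarrow> F X \<le> F Xs"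
  shows "fst (max_iter N F t) \<subseteq> Xs \<and> Xs \<subseteq> snd (max_iter N F t) \<and> snd (max_iter N F t) \<subseteq> N"
proof (induction t)
  case 0
  then show ?case using XsN by (simp add: max_iter_def)
next
  case (Suc t)
  have e: "max_iter N F (Suc t) = max_step F (fst (max_iter N F t), snd (max_iter N F t))"
    by (simp add: max_iter_def)
  show ?case unfolding e using step_inv[OF qs XsN mx] Suc by blast
qed

theorem theorem2:
  fixes n :: nat and F :: "nat set \<Rightarrow> real" and Xp Yp Xs :: "nat set"
  assumes "quasi_submodular {1..n} F"
    and "max_outputs {1..n} F Xp Yp"
    and "Xs \<subseteq> {1..n}"
    and "\<forall>X. X \<subseteq> {1..n} \<longrightarrow> F X \<le> F Xs"
  shows "Xp \<subseteq> Xs \<and> Xs \<subseteq> Yp"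
proof -
  obtain t where "max_iter {1..n} F t = (Xp, Yp)" using assms(2) unfolding max_outputs_def by blast
  thus ?thesis using iter_inv[OF assms(1) assms(3) assms(4), of t] by simp
qed

end
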